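(* Let $\sigma>0$, $\varepsilon>0$, $D=\ln(1/\varepsilon)+n\ln 8$, and $I=\{x\in(\mathbb{N}\cup\{0\})^n:\sum_{j=1}^n u(x_j)<D\}$. Then $$|I|\le\sum_{q=0}^n 2^{n-q}\binom{n}{n-q}\mathrm{Vol}(X_q),$$ where $X_q=\{x\in[0,+\infty)^q:\sum_{j=1}^q u(x_j)<D-(n-q)\Delta(\sigma)\}$ and $\mathrm{Vol}$ is $q$-dimensional Lebesgue measure.
   Context: $u(x)=\frac{x}{2}\ln\big(\frac{2}{e}x\big)-x\ln\sigma$ for $x>0$, $u(0)=0$; $r=\lfloor\sigma^2/2\rfloor$; $\Delta(\sigma)=\min\{u(r),u(r+1)\}$. *)

theory Defs
  imports "HOL-Analysis.Analysis"
begin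

definition u :: "real \<Rightarrow> real \<Rightarrow> real" where
  "u \<sigma> x = (if x = 0 then 0 else x / 2 * ln (2 / exp 1 * x) - x * ln \<sigma>)"

definition Delta :: "real \<Rightarrow> real" where
  "Delta \<sigma> = (let r = real_of_int \<lfloor>\<sigma>\<^sup>2 / 2\<rfloor> in min (u \<sigma> r) (u \<sigma> (r + 1)))"

end

theory Submission
  imports Defs
begin


lemma u_pos: "x > 0 \<Longrightarrow> u \<sigma> x = x/2 * ln (2 / exp 1 * x) - x * ln \<sigma>"
  by (simp add: u_def)

lemma u_deriv:
  assumes "x > 0" "\<sigma> > 0"
  shows "((\<lambda>x. x/2 * ln (2 / exp 1 * x) - x * ln \<sigma>) has_real_derivative
          (ln (2 / exp 1 * x) / 2 + 1/2 - ln \<sigma>)) (at x)"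
proof -
  have "((\<lambda>x. x/2 * ln (2 / exp 1 * x) - x * ln \<sigma>) has_real_derivative
          (1/2 * ln (2 / exp 1 * x) + x/2 * (1 / (2 / exp 1 * x) * (2 / exp 1)) - 1 * ln \<sigma>)) (at x)"
    using assms by (auto intro!: derivative_eq_intros)
  moreover have "1/2 * ln (2 / exp 1 * x) + x/2 * (1 / (2 / exp 1 * x) * (2 / exp 1)) - 1 * ln \<sigma>
     = ln (2 / exp 1 * x) / 2 + 1/2 - ln \<sigma>" using assms by (simp add: field_simps)
  ultimately show ?thesis using assms by simp
qed

lemma ln_part: fixes x \<sigma> :: real assumes "x > 0" "\<sigma> > 0"
  shows "ln (2 / exp 1 * x) / 2 + 1/2 - ln \<sigma> = (ln (2*x) - ln (\<sigma>^2)) / 2"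
  using assms by (simp add: ln_mult ln_div ln_realpow) (simp add: field_simps)

lemma u_dec:
  assumes "\<sigma> > 0" "0 \<le> a" "a \<le> b" "b \<le> \<sigma>^2/2"
  shows "u \<sigma> b \<le> u \<sigma> a"
proof (cases "a = 0")
  case True
  show ?thesis
  proof (cases "b = 0")
    case False
    with assms have b: "b > 0" by simp
    have "ln (2 / exp 1 * b) = ln (2*b) - 1" using b by (simp add: ln_mult ln_div)
    also have "ln (2*b) \<le> ln (\<sigma>^2)" using b assms by simp
    finally have "ln (2 / exp 1 * b) - 2 * ln \<sigma> \<le> 0" using assms by (simp add: ln_realpow)
    moreover have "u \<sigma> b = b/2 * (ln (2 / exp 1 * b) - 2 * ln \<sigma>)" using b by (simp add: u_def algebra_simps)
    moreover have "b/2 * (ln (2 / exp 1 * b) - 2 * ln \<sigma>) \<le> 0"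
      by (rule mult_nonneg_nonpos) (use b \<open>ln (2 / exp 1 * b) - 2 * ln \<sigma> \<le> 0\<close> in auto)
    ultimately have "u \<sigma> b \<le> 0" by linarith
    thus ?thesis using True by (simp add: u_def)
  qed (use True in simp)
next
  case False
  hence a: "a > 0" using assms by simp
  let ?f = "\<lambda>x. x/2 * ln (2 / exp 1 * x) - x * ln \<sigma>"
  have "?f b \<le> ?f a"
  proof (rule DERIV_nonpos_imp_nonincreasing[OF assms(3)])
    fix x assume x: "a \<le> x" "x \<le> b"
    hence "x > 0" using a by simp
    moreover have "ln (2*x) \<le> ln (\<sigma>^2)" using x a assms by simp
    moreover have "(?f has_real_derivative ((ln (2*x) - ln (\<sigma>^2))/2)) (at x)"
      using u_deriv[OF \<open>x > 0\<close> assms(1)] unfolding ln_part[OF \<open>x > 0\<close> assms(1)] .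
    ultimately show "\<exists>y. (?f has_real_derivative y) (at x) \<and> y \<le> 0"
      by (intro exI[of _ "(ln (2*x) - ln (\<sigma>^2))/2"]) auto
  qed
  thus ?thesis using a assms by (simp add: u_def)
qed

lemma u_inc:
  assumes "\<sigma> > 0" "\<sigma>^2/2 \<le> a" "a \<le> b"
  shows "u \<sigma> a \<le> u \<sigma> b"
proof -
  have "\<sigma>^2 > 0" using assms by simp
  hence a: "a > 0" using assms by linarith
  let ?f = "\<lambda>x. x/2 * ln (2 / exp 1 * x) - x * ln \<sigma>"
  have "?f a \<le> ?f b"
  proof (rule DERIV_nonneg_imp_nondecreasing[OF assms(3)])
    fix x assume x: "a \<le> x" "x \<le> b"
    hence "x > 0" using a by simp
    moreover have "ln (\<sigma>^2) \<le> ln (2*x)" using x a assms by simp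
    moreover have "(?f has_real_derivative ((ln (2*x) - ln (\<sigma>^2))/2)) (at x)"
      using u_deriv[OF \<open>x > 0\<close> assms(1)] unfolding ln_part[OF \<open>x > 0\<close> assms(1)] .
    ultimately show "\<exists>y. (?f has_real_derivative y) (at x) \<and> 0 \<le> y"
      by (intro exI[of _ "(ln (2*x) - ln (\<sigma>^2))/2"]) auto
  qed
  thus ?thesis using a assms by (simp add: u_def)
qed

lemma u_meas: "u \<sigma> \<in> borel_measurable borel"
  unfolding u_def by measurable

lemma X_meas: fixes q :: nat shows "{x \<in> {..<q} \<rightarrow>\<^sub>E {0::real..}. (\<Sum>j<q. u \<sigma> (x j)) < B} \<in> sets (Pi\<^sub>M {..<q} (\<lambda>_. lborel))"
proof -
  have "{x \<in> {..<q} \<rightarrow>\<^sub>E {0::real..}. (\<Sum>j<q. u \<sigma> (x j)) < B} =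
     {x \<in> space (Pi\<^sub>M {..<q} (\<lambda>_. lborel)). (\<forall>j\<in>{..<q}. 0 \<le> x j) \<and> (\<Sum>j<q. u \<sigma> (x j)) < B}"
    by (auto simp: space_PiM PiE_def Pi_def)
  also have "\<dots> \<in> sets (Pi\<^sub>M {..<q} (\<lambda>_. lborel))"
    using u_meas[measurable] by measurable
  finally show ?thesis .
qed

lemma cube_meas: fixes q :: nat shows "emeasure (Pi\<^sub>M {..<q} (\<lambda>_. lborel)) (Pi\<^sub>E {..<q} (\<lambda>j. if P j then {a j..<a j + 1::real} else {a j - 1<..a j})) = 1"
    by (subst product_sigma_finite.emeasure_PiM) (auto simp: product_sigma_finite_def lborel.sigma_finite_measure_axioms intro!: prod.neutral)


definition Sp :: "real \<Rightarrow> nat set" where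
  "Sp \<sigma> = {k. \<sigma>^2/2 < real k + 1 \<and> real k - 1 < \<sigma>^2/2}"

definition Iv :: "real \<Rightarrow> nat \<Rightarrow> real set" where
  "Iv \<sigma> k = (if real k + 1 \<le> \<sigma>^2/2 then {real k..<real k + 1} else {real k - 1<..real k})"

lemma Iv_prop:
  assumes "\<sigma> > 0" "k \<notin> Sp \<sigma>" "t \<in> Iv \<sigma> k"
  shows "0 \<le> t \<and> u \<sigma> t \<le> u \<sigma> (real k)"
proof (cases "real k + 1 \<le> \<sigma>^2/2")
  case True
  then show ?thesis using assms u_dec[of \<sigma> "real k" t] by (auto simp: Iv_def)
next
  case False
  hence "real k - 1 \<ge> \<sigma>^2/2" using assms(2) by (auto simp: Sp_def)
  moreover have "\<sigma>^2 > 0" using assms by simp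
  moreover have "t > real k - 1" "t \<le> real k" using assms(3) False by (auto simp: Iv_def)
  ultimately have "0 \<le> t" by linarith
  thus ?thesis using \<open>real k - 1 \<ge> \<sigma>^2/2\<close> \<open>t > real k - 1\<close> \<open>t \<le> real k\<close> assms u_inc[of \<sigma> t "real k"] by auto
qed

lemma Iv_disj:
  assumes "k \<notin> Sp \<sigma>" "k' \<notin> Sp \<sigma>" "k \<noteq> k'"
  shows "Iv \<sigma> k \<inter> Iv \<sigma> k' = {}"
proof -
  have k: "real k + 1 \<le> \<sigma>^2/2 \<or> real k - 1 \<ge> \<sigma>^2/2" using assms(1) by (auto simp: Sp_def)
  have k': "real k' + 1 \<le> \<sigma>^2/2 \<or> real k' - 1 \<ge> \<sigma>^2/2" using assms(2) by (auto simp: Sp_def)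
  have "k + 1 \<le> k' \<or> k' + 1 \<le> k" using assms(3) by linarith
  hence "real k + 1 \<le> real k' \<or> real k' + 1 \<le> real k" by (metis of_nat_1 of_nat_add of_nat_le_iff)
  thus ?thesis using k k' unfolding Iv_def by (auto split: if_splits)
qed

lemma lattice:
  fixes q :: nat
  assumes "\<sigma> > 0" "finite F"
    and F: "F \<subseteq> {y \<in> {..<q} \<rightarrow>\<^sub>E (UNIV :: nat set). (\<forall>j<q. y j \<notin> Sp \<sigma>) \<and> (\<Sum>j<q. u \<sigma> (real (y j))) < B}"
  shows "ennreal (real (card F)) \<le> emeasure (Pi\<^sub>M {..<q} (\<lambda>_. lborel))
                   {x \<in> {..<q} \<rightarrow>\<^sub>E {0::real..}. (\<Sum>j<q. u \<sigma> (x j)) < B}"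
proof -
  let ?M = "Pi\<^sub>M {..<q} (\<lambda>_. lborel)"
  let ?X = "{x \<in> {..<q} \<rightarrow>\<^sub>E {0::real..}. (\<Sum>j<q. u \<sigma> (x j)) < B}"
  define C where "C y = Pi\<^sub>E {..<q} (\<lambda>j. Iv \<sigma> (y j))" for y :: "nat \<Rightarrow> nat"
  have Cm: "C y \<in> sets ?M" for y
    unfolding C_def by (rule sets_PiM_I_finite) (auto simp: Iv_def)
  have C1: "emeasure ?M (C y) = 1" for y
    unfolding C_def Iv_def using cube_meas[of q "\<lambda>j. real (y j) + 1 \<le> \<sigma>^2/2" "\<lambda>j. real (y j)"] by simp
  have disj: "disjoint_family_on C F"
    unfolding disjoint_family_on_def
  proof (intro ballI impI)
    fix y y' assume y: "y \<in> F" "y' \<in> F" "y \<noteq> y'"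
    then obtain j where j: "j < q" "y j \<noteq> y' j" using F PiE_ext[of y "{..<q}" "\<lambda>_. UNIV" y'] by blast
    have "Iv \<sigma> (y j) \<inter> Iv \<sigma> (y' j) = {}" using F y j by (intro Iv_disj) auto
    thus "C y \<inter> C y' = {}" unfolding C_def using j by (auto simp: PiE_def Pi_def) 
  qed
  have sub: "(\<Union>y\<in>F. C y) \<subseteq> ?X"
  proof
    fix t assume "t \<in> (\<Union>y\<in>F. C y)"
    then obtain y where y: "y \<in> F" "t \<in> C y" by blast
    have tj: "0 \<le> t j \<and> u \<sigma> (t j) \<le> u \<sigma> (real (y j))" if "j < q" for j
      using Iv_prop[of \<sigma> "y j" "t j"] y F that assms(1) by (auto simp: C_def)
    have "(\<Sum>j<q. u \<sigma> (t j)) \<le> (\<Sum>j<q. u \<sigma> (real (y j)))" using tj by (intro sum_mono) auto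
    also have "\<dots> < B" using F y by auto
    finally show "t \<in> ?X" using y tj by (auto simp: C_def PiE_def Pi_def)
  qed
  have "ennreal (real (card F)) = (\<Sum>y\<in>F. emeasure ?M (C y))" by (simp add: C1 ennreal_of_nat_eq_real_of_nat)
  also have "\<dots> = emeasure ?M (\<Union>y\<in>F. C y)" using Cm disj assms(2) by (intro sum_emeasure) auto
  also have "\<dots> \<le> emeasure ?M ?X" using sub X_meas by (intro emeasure_mono) auto
  finally show ?thesis .
qed

lemma Sp_sub: assumes "\<sigma> > 0" shows "Sp \<sigma> \<subseteq> {nat \<lfloor>\<sigma>\<^sup>2 / 2\<rfloor>, nat \<lfloor>\<sigma>\<^sup>2 / 2\<rfloor> + 1}"
proof
  fix k assume k: "k \<in> Sp \<sigma>"
  define r where "r = \<lfloor>\<sigma>\<^sup>2 / 2\<rfloor>"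
  have r1: "real_of_int r \<le> \<sigma>^2/2" "\<sigma>^2/2 < real_of_int r + 1" unfolding r_def by linarith+
  have "r \<ge> 0" unfolding r_def by simp
  have k1: "real k - 1 < \<sigma>^2/2" "\<sigma>^2/2 < real k + 1" using k by (auto simp: Sp_def)
  have "real_of_int (int k) = real k" by simp
  hence "real_of_int (int k) < real_of_int (r + 2)" "real_of_int (r - 1) < real_of_int (int k)"
    using r1 k1 by linarith+
  hence "int k < r + 2" "r - 1 < int k" by (simp_all only: of_int_less_iff)
  hence "int k = r \<or> int k = r + 1" by linarith
  thus "k \<in> {nat r, nat r + 1}" using \<open>r \<ge> 0\<close> by auto
qed

lemma Sp_fin: "\<sigma> > 0 \<Longrightarrow> finite (Sp \<sigma>)"
  using Sp_sub finite_subset by blast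

lemma Sp_card: "\<sigma> > 0 \<Longrightarrow> card (Sp \<sigma>) \<le> 2"
proof -
  assume "\<sigma> > 0"
  hence "card (Sp \<sigma>) \<le> card {nat \<lfloor>\<sigma>\<^sup>2 / 2\<rfloor>, nat \<lfloor>\<sigma>\<^sup>2 / 2\<rfloor> + 1}"
    using Sp_sub by (intro card_mono) auto
  thus ?thesis by simp
qed

lemma Sp_Delta: assumes "\<sigma> > 0" "k \<in> Sp \<sigma>" shows "Delta \<sigma> \<le> u \<sigma> (real k)"
proof -
  have r0: "\<lfloor>\<sigma>\<^sup>2 / 2\<rfloor> \<ge> 0" by simp
  have "k = nat \<lfloor>\<sigma>\<^sup>2 / 2\<rfloor> \<or> k = nat \<lfloor>\<sigma>\<^sup>2 / 2\<rfloor> + 1" using Sp_sub[OF assms(1)] assms(2) by auto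
  hence "real k = real_of_int \<lfloor>\<sigma>\<^sup>2 / 2\<rfloor> \<or> real k = real_of_int \<lfloor>\<sigma>\<^sup>2 / 2\<rfloor> + 1"
    using r0 by auto
  thus ?thesis unfolding Delta_def Let_def by auto
qed

lemma classT:
  fixes n :: nat and D :: real
  assumes s: "\<sigma> > 0" and fN: "finite N"
    and N: "N \<subseteq> {x \<in> {..<n} \<rightarrow>\<^sub>E (UNIV :: nat set). (\<Sum>j<n. u \<sigma> (real (x j))) < D}"
    and T: "T \<subseteq> {..<n}"
  shows "ennreal (real (card {x\<in>N. {j\<in>{..<n}. x j \<notin> Sp \<sigma>} = T}))
     \<le> ennreal (2 ^ (n - card T)) * emeasure (Pi\<^sub>M {..<card T} (\<lambda>_. lborel))
                   {x \<in> {..<card T} \<rightarrow>\<^sub>E {0::real..}.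
                      (\<Sum>j<card T. u \<sigma> (x j)) < D - real (n - card T) * Delta \<sigma>}"
proof -
  define q where "q = card T"
  have fT: "finite T" using T finite_subset by blast
  obtain g where g: "bij_betw g {..<q} T" using ex_bij_betw_nat_finite[OF fT] unfolding q_def
    by (auto simp: lessThan_atLeast0)
  define NT where "NT = {x\<in>N. {j\<in>{..<n}. x j \<notin> Sp \<sigma>} = T}"
  define \<psi> where "\<psi> x = (\<lambda>j. if j < q then x (g j) else undefined)" for x :: "nat \<Rightarrow> nat"
  define \<phi> where "\<phi> x = (\<psi> x, restrict x ({..<n} - T))" for x :: "nat \<Rightarrow> nat"
  define F where "F = \<psi> ` NT"
  define V where "V = ({..<n} - T) \<rightarrow>\<^sub>E Sp \<sigma>"
  have fNT: "finite NT" using fN unfolding NT_def by simp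
  have fF: "finite F" unfolding F_def using fNT by simp
  have fV: "finite V" unfolding V_def using Sp_fin[OF s] by (intro finite_PiE) auto
  have gT: "g j \<in> T" if "j < q" for j using g that by (auto simp: bij_betw_def)
  have inj: "inj_on \<phi> NT"
  proof
    fix x y assume xy: "x \<in> NT" "y \<in> NT" "\<phi> x = \<phi> y"
    show "x = y"
    proof (rule PiE_ext[of x "{..<n}" "\<lambda>_. UNIV" y])
      show "x \<in> {..<n} \<rightarrow>\<^sub>E UNIV" "y \<in> {..<n} \<rightarrow>\<^sub>E UNIV" using xy N by (auto simp: NT_def)
      fix i assume i: "i \<in> {..<n}"
      show "x i = y i"
      proof (cases "i \<in> T")
        case True
        then obtain j where j: "j < q" "g j = i" using g by (auto simp: bij_betw_def)
        have "\<psi> x j = \<psi> y j" using xy(3) by (simp add: \<phi>_def)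
        thus ?thesis using j by (simp add: \<psi>_def)
      next
        case False
        have "restrict x ({..<n} - T) i = restrict y ({..<n} - T) i" using xy(3) by (simp add: \<phi>_def)
        thus ?thesis using False i by simp
      qed
    qed
  qed
  have img: "\<phi> ` NT \<subseteq> F \<times> V"
  proof
    fix p assume "p \<in> \<phi> ` NT"
    then obtain x where x: "x \<in> NT" "p = \<phi> x" by blast
    have "restrict x ({..<n} - T) \<in> V" using x(1) by (auto simp: V_def NT_def)
    thus "p \<in> F \<times> V" using x by (auto simp: \<phi>_def F_def)
  qed
  have "card NT \<le> card (F \<times> V)"
    using card_inj_on_le[OF inj img] fF fV by simp
  hence c1: "card NT \<le> card V * card F" by (simp add: card_cartesian_product mult.commute)
  have "card V = card (Sp \<sigma>) ^ card ({..<n} - T)" unfolding V_def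
    by (simp add: card_PiE)
  also have "card ({..<n} - T) = n - q" unfolding q_def using T fT by (simp add: card_Diff_subset)
  finally have "card V \<le> 2 ^ (n - q)" using Sp_card[OF s] by (simp add: power_mono)
  hence c2: "card NT \<le> 2 ^ (n - q) * card F" using c1
    by (meson le_trans mult_le_mono1)
  have Fsub: "F \<subseteq> {y \<in> {..<q} \<rightarrow>\<^sub>E (UNIV :: nat set). (\<forall>j<q. y j \<notin> Sp \<sigma>) \<and>
                 (\<Sum>j<q. u \<sigma> (real (y j))) < D - real (n - q) * Delta \<sigma>}"
  proof
    fix y assume "y \<in> F"
    then obtain x where x: "x \<in> NT" "y = \<psi> x" by (auto simp: F_def)
    have xN: "x \<in> N" and NS: "{j\<in>{..<n}. x j \<notin> Sp \<sigma>} = T" using x by (auto simp: NT_def)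
    have ns: "x (g j) \<notin> Sp \<sigma>" if "j < q" for j using gT[OF that] NS by auto
    have sp: "x i \<in> Sp \<sigma>" if "i \<in> {..<n} - T" for i using that NS by auto
    have "(\<Sum>j<q. u \<sigma> (real (y j))) = (\<Sum>j<q. u \<sigma> (real (x (g j))))"
      using x by (simp add: \<psi>_def)
    also have "\<dots> = (\<Sum>i\<in>T. u \<sigma> (real (x i)))"
      using sum.reindex_bij_betw[OF g, of "\<lambda>i. u \<sigma> (real (x i))"] by simp
    finally have e1: "(\<Sum>j<q. u \<sigma> (real (y j))) = (\<Sum>i\<in>T. u \<sigma> (real (x i)))" .
    have e2: "(\<Sum>i<n. u \<sigma> (real (x i))) = (\<Sum>i\<in>{..<n} - T. u \<sigma> (real (x i))) + (\<Sum>i\<in>T. u \<sigma> (real (x i)))"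
      using sum.subset_diff[OF T, of "\<lambda>i. u \<sigma> (real (x i))"] by simp
    have "(\<Sum>i\<in>{..<n} - T. Delta \<sigma>) \<le> (\<Sum>i\<in>{..<n} - T. u \<sigma> (real (x i)))"
      using sp Sp_Delta[OF s] by (intro sum_mono) auto
    moreover have "(\<Sum>i\<in>{..<n} - T. Delta \<sigma>) = real (n - q) * Delta \<sigma>"
      using \<open>card ({..<n} - T) = n - q\<close> by simp
    moreover have "(\<Sum>i<n. u \<sigma> (real (x i))) < D" using xN N by auto
    ultimately have "(\<Sum>j<q. u \<sigma> (real (y j))) < D - real (n - q) * Delta \<sigma>"
      using e1 e2 by linarith
    moreover have "y \<in> {..<q} \<rightarrow>\<^sub>E UNIV" using x by (auto simp: \<psi>_def PiE_def extensional_def)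
    ultimately show "y \<in> {y \<in> {..<q} \<rightarrow>\<^sub>E (UNIV :: nat set). (\<forall>j<q. y j \<notin> Sp \<sigma>) \<and>
                 (\<Sum>j<q. u \<sigma> (real (y j))) < D - real (n - q) * Delta \<sigma>}"
      using x ns by (auto simp: \<psi>_def)
  qed
  have L: "ennreal (real (card F)) \<le> emeasure (Pi\<^sub>M {..<q} (\<lambda>_. lborel))
                   {x \<in> {..<q} \<rightarrow>\<^sub>E {0::real..}. (\<Sum>j<q. u \<sigma> (x j)) < D - real (n - q) * Delta \<sigma>}"
    by (rule lattice[OF s fF Fsub])
  have "ennreal (real (card NT)) \<le> ennreal (real (2 ^ (n - q) * card F))"
    using c2 by (simp del: of_nat_power of_nat_mult)
  also have "\<dots> = ennreal (2 ^ (n - q)) * ennreal (real (card F))"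
    by (simp add: ennreal_mult)
  also have "\<dots> \<le> ennreal (2 ^ (n - q)) * emeasure (Pi\<^sub>M {..<q} (\<lambda>_. lborel))
                   {x \<in> {..<q} \<rightarrow>\<^sub>E {0::real..}. (\<Sum>j<q. u \<sigma> (x j)) < D - real (n - q) * Delta \<sigma>}"
    using L by (rule mult_left_mono) simp
  finally show ?thesis unfolding NT_def q_def .
qed

theorem lemma11:
  fixes \<sigma> \<epsilon> :: real and n :: nat
  assumes "\<sigma> > 0" and "\<epsilon> > 0"
  shows "ennreal (real (card {x \<in> {..<n} \<rightarrow>\<^sub>E (UNIV :: nat set).
            (\<Sum>j<n. u \<sigma> (real (x j))) < ln (1 / \<epsilon>) + real n * ln 8}))
         \<le> (\<Sum>q\<le>n. ennreal (2 ^ (n - q) * real (n choose (n - q)))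
               * emeasure (Pi\<^sub>M {..<q} (\<lambda>_. lborel))
                   {x \<in> {..<q} \<rightarrow>\<^sub>E {0::real..}.
                      (\<Sum>j<q. u \<sigma> (x j)) < ln (1 / \<epsilon>) + real n * ln 8 - real (n - q) * Delta \<sigma>})"
proof -
  define D where "D = ln (1 / \<epsilon>) + real n * ln 8"
  define N where "N = {x \<in> {..<n} \<rightarrow>\<^sub>E (UNIV :: nat set). (\<Sum>j<n. u \<sigma> (real (x j))) < D}"
  define E where "E q = emeasure (Pi\<^sub>M {..<q} (\<lambda>_. lborel))
                   {x \<in> {..<q} \<rightarrow>\<^sub>E {0::real..}. (\<Sum>j<q. u \<sigma> (x j)) < D - real (n - q) * Delta \<sigma>}" for q
  define NS where "NS x = {j\<in>{..<n}. x j \<notin> Sp \<sigma>}" for x :: "nat \<Rightarrow> nat"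
  have "ennreal (real (card N)) \<le> (\<Sum>q\<le>n. ennreal (2 ^ (n - q) * real (n choose (n - q))) * E q)"
  proof (cases "finite N")
    case False
    thus ?thesis by simp
  next
    case fN: True
    have "(\<Sum>T\<in>Pow {..<n}. \<Sum>x\<in>{x\<in>N. NS x = T}. (1::nat)) = (\<Sum>x\<in>N. 1)"
      by (rule sum.group) (auto simp: fN NS_def)
    hence cN: "card N = (\<Sum>T\<in>Pow {..<n}. card {x\<in>N. NS x = T})" by simp
    have "ennreal (real (card N)) = (\<Sum>T\<in>Pow {..<n}. ennreal (real (card {x\<in>N. NS x = T})))"
      unfolding cN of_nat_sum by (subst sum_ennreal) auto
    also have "\<dots> \<le> (\<Sum>T\<in>Pow {..<n}. ennreal (2 ^ (n - card T)) * E (card T))"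
      unfolding E_def NS_def
      by (intro sum_mono classT[OF assms(1) fN]) (auto simp: N_def)
    also have "\<dots> = (\<Sum>q\<le>n. \<Sum>T\<in>{T\<in>Pow {..<n}. card T = q}. ennreal (2 ^ (n - card T)) * E (card T))"
      by (rule sum.group[symmetric]) (auto simp: card_mono[of "{..<n}", simplified])
    also have "\<dots> = (\<Sum>q\<le>n. of_nat (n choose q) * (ennreal (2 ^ (n - q)) * E q))"
    proof (rule sum.cong[OF refl])
      fix q assume "q \<in> {..n}"
      have "card {T\<in>Pow {..<n}. card T = q} = n choose q"
        using n_subsets[of "{..<n}" q] by (simp add: Pow_def)
      moreover have "(\<Sum>T\<in>{T\<in>Pow {..<n}. card T = q}. ennreal (2 ^ (n - card T)) * E (card T))
          = (\<Sum>T\<in>{T\<in>Pow {..<n}. card T = q}. ennreal (2 ^ (n - q)) * E q)" by (rule sum.cong) auto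
      ultimately show "(\<Sum>T\<in>{T\<in>Pow {..<n}. card T = q}. ennreal (2 ^ (n - card T)) * E (card T))
          = of_nat (n choose q) * (ennreal (2 ^ (n - q)) * E q)" by simp
    qed
    also have "\<dots> = (\<Sum>q\<le>n. ennreal (2 ^ (n - q) * real (n choose (n - q))) * E q)"
    proof (rule sum.cong[OF refl])
      fix q assume q: "q \<in> {..n}"
      have "n choose (n - q) = n choose q" using q by (simp add: binomial_symmetric[symmetric])
      thus "of_nat (n choose q) * (ennreal (2 ^ (n - q)) * E q) = ennreal (2 ^ (n - q) * real (n choose (n - q))) * E q"
        by (simp add: ennreal_mult ennreal_of_nat_eq_real_of_nat mult_ac)
    qed
    finally show ?thesis .
  qed
  thus ?thesis unfolding N_def E_def D_def .
qed
end
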